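(* Let $(X,d)$ be a geometrically doubling metric space, $E\subseteq X$, $m\in\mathbb{Z}$, and $0<b_0\le B_0<\infty$, $\delta\in(0,1)$ with $12B_0\delta\le b_0$. Let $\{x^k_\alpha\}_{k\in\mathbb{Z},\alpha}$ be points of $X$ satisfying: (1) for all $k\in\mathbb{Z}$: $d(x^k_\alpha,x^k_\beta)\ge b_0\delta^k$ for $\alpha\ne\beta$, and $\min_\alpha d(x,x^k_\alpha)<B_0\delta^k$ for all $x\in X$; (2) for all $k\ge m$ and both $F\in\{E,X\setminus E\}$: $\min_{\alpha: x^k_\alpha\in F} d(x,x^k_\alpha)<B_0\delta^k$ for all $x\in F$; (3) for all $k\ge m$ and both $F\in\{E,X\setminus E\}$: $\operatorname{dist}(x^k_\alpha,X\setminus F)\ge b_0\delta^k$ whenever $x^k_\alpha\in F$; (4) there is exactly one index $\alpha_0$ with $x^m_{\alpha_0}\in E$. Let $\le$ be a dyadic partial order on the index pairs (with $c_0=b_0$, $C_0=B_0$) such that whenever $k\ge m$ and $(\ell,\beta)\le(k,\alpha)$, the points $x^\ell_\beta$ and $x^k_\alpha$ lie in the same set $F\in\{E,X\setminus E\}$. For each $\alpha$ define $\bar Q^m_\alpha=\overline{\{x^\ell_\beta:(\ell,\beta)\le(m,\alpha)\}}$ and $\tilde Q^m_{\alpha_0}=X\setminus\bigcup_{\gamma\ne\alpha_0}\bar Q^m_\gamma$. Then $\tilde Q^m_{\alpha_0}\subseteq E\subseteq\bar Q^m_{\alpha_0}$.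
   Context: Notation: $\operatorname{dist}(x,A)=\inf_{a\in A}d(x,a)$; closures are taken in $X$. Given points $\{x^k_\alpha\}$ and constants $\delta\in(0,1)$, $0<c_0\le C_0$, a dyadic partial order is a partial order $\le$ on the index pairs $(k,\alpha)$ such that: (a) every $(k+1,\beta)$ satisfies $(k+1,\beta)\le(k,\alpha)$ for exactly one $\alpha$; (b) for $\ell\le k$, $(\ell,\beta)\le(k,\alpha)$ iff $\ell=k$ and $\beta=\alpha$; (c) for $\ell>k$, $(\ell,\beta)\le(k,\alpha)$ iff there exist $\eta_k=\alpha,\eta_{k+1},\dots,\eta_\ell=\beta$ with $(j+1,\eta_{j+1})\le(j,\eta_j)$ for all $j\in\{k,\dots,\ell-1\}$; (d) $d(x^{k+1}_\beta,x^k_\alpha)<\tfrac12c_0\delta^k \Rightarrow (k+1,\beta)\le(k,\alpha)\Rightarrow d(x^{k+1}_\beta,x^k_\alpha)<C_0\delta^k$. A space is geometrically doubling if there is $A_1\in\mathbb{N}$ such that every open ball $B(x,r)=\{y:d(x,y)<r\}$ can be covered by at most $A_1$ open balls of radius $r/2$. *)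

theory Defs
  imports "HOL-Analysis.Analysis"
begin

definition geometrically_doubling :: "'a::metric_space itself \<Rightarrow> bool" where
  "geometrically_doubling _ \<longleftrightarrow>
     (\<exists>A1::nat. \<forall>(x::'a) (r::real). \<exists>C. finite C \<and> card C \<le> A1 \<and>
         ball x r \<subseteq> (\<Union>c\<in>C. ball c (r/2)))"

definition dyadic_partial_order ::
  "(int \<Rightarrow> 'i \<Rightarrow> 'a::metric_space) \<Rightarrow> (int \<Rightarrow> 'i set) \<Rightarrow> real \<Rightarrow> real \<Rightarrow> real \<Rightarrow>
   (int \<times> 'i \<Rightarrow> int \<times> 'i \<Rightarrow> bool) \<Rightarrow> bool" where
  "dyadic_partial_order x I \<delta> c0 C0 leq \<longleftrightarrow>
     \<comment> \<open>partial order on the index pairs\<close>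
     (\<forall>k. \<forall>\<alpha>\<in>I k. leq (k,\<alpha>) (k,\<alpha>)) \<and>
     (\<forall>k \<alpha> l \<beta>. \<alpha> \<in> I k \<longrightarrow> \<beta> \<in> I l \<longrightarrow> leq (k,\<alpha>) (l,\<beta>) \<longrightarrow> leq (l,\<beta>) (k,\<alpha>)
        \<longrightarrow> (k,\<alpha>) = (l,\<beta>)) \<and>
     (\<forall>k \<alpha> l \<beta> j \<gamma>. \<alpha> \<in> I k \<longrightarrow> \<beta> \<in> I l \<longrightarrow> \<gamma> \<in> I j \<longrightarrow>
        leq (k,\<alpha>) (l,\<beta>) \<longrightarrow> leq (l,\<beta>) (j,\<gamma>) \<longrightarrow> leq (k,\<alpha>) (j,\<gamma>)) \<and>
     \<comment> \<open>(a)\<close>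
     (\<forall>k. \<forall>\<beta>\<in>I (k+1). \<exists>!\<alpha>. \<alpha> \<in> I k \<and> leq (k+1,\<beta>) (k,\<alpha>)) \<and>
     \<comment> \<open>(b)\<close>
     (\<forall>l k. \<forall>\<beta>\<in>I l. \<forall>\<alpha>\<in>I k. l \<le> k \<longrightarrow>
        (leq (l,\<beta>) (k,\<alpha>) \<longleftrightarrow> l = k \<and> \<beta> = \<alpha>)) \<and>
     \<comment> \<open>(c)\<close>
     (\<forall>l k. \<forall>\<beta>\<in>I l. \<forall>\<alpha>\<in>I k. l > k \<longrightarrow>
        (leq (l,\<beta>) (k,\<alpha>) \<longleftrightarrow>
          (\<exists>\<eta>::int \<Rightarrow> 'i. \<eta> k = \<alpha> \<and> \<eta> l = \<beta> \<and> (\<forall>j\<in>{k..l}. \<eta> j \<in> I j) \<and>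
             (\<forall>j\<in>{k..l-1}. leq (j+1, \<eta> (j+1)) (j, \<eta> j))))) \<and>
     \<comment> \<open>(d)\<close>
     (\<forall>k. \<forall>\<alpha>\<in>I k. \<forall>\<beta>\<in>I (k+1).
        (dist (x (k+1) \<beta>) (x k \<alpha>) < c0/2 * \<delta> powi k \<longrightarrow> leq (k+1,\<beta>) (k,\<alpha>)) \<and>
        (leq (k+1,\<beta>) (k,\<alpha>) \<longrightarrow> dist (x (k+1) \<beta>) (x k \<alpha>) < C0 * \<delta> powi k))"

end

theory Submission
  imports Defs
begin

lemma doubling_iter:
  assumes "geometrically_doubling TYPE('a::metric_space)"
  shows "\<exists>C. finite C \<and> ball (y::'a) r \<subseteq> (\<Union>c\<in>C. ball c (r/2^n))"
proof (induction n)
  case 0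
  show ?case by (rule exI[of _ "{y}"]) auto
next
  case (Suc n)
  then obtain C where C: "finite C" "ball y r \<subseteq> (\<Union>c\<in>C. ball c (r/2^n))" by blast
  have "\<forall>c::'a. \<exists>D. finite D \<and> ball c (r/2^n) \<subseteq> (\<Union>d\<in>D. ball d (r/2^n/2))"
    using assms unfolding geometrically_doubling_def by blast
  then obtain f where f: "\<And>c::'a. finite (f c) \<and> ball c (r/2^n) \<subseteq> (\<Union>d\<in>f c. ball d (r/2^n/2))"
    by metis
  have "ball y r \<subseteq> (\<Union>d\<in>(\<Union>c\<in>C. f c). ball d (r/2^Suc n))"
  proof
    fix z assume "z \<in> ball y r"
    then obtain c where "c \<in> C" "z \<in> ball c (r/2^n)" using C by blast
    then obtain d where "d \<in> f c" "z \<in> ball d (r/2^n/2)" using f by blast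
    then show "z \<in> (\<Union>d\<in>(\<Union>c\<in>C. f c). ball d (r/2^Suc n))" using \<open>c \<in> C\<close>
      by (auto simp: field_simps)
  qed
  moreover have "finite (\<Union>c\<in>C. f c)" using C f by blast
  ultimately show ?case by blast
qed

lemma sep_finite:
  assumes "geometrically_doubling TYPE('a::metric_space)" "0 < s"
    "P \<subseteq> ball (y::'a) R" "\<And>p q. p\<in>P \<Longrightarrow> q\<in>P \<Longrightarrow> p\<noteq>q \<Longrightarrow> s \<le> dist p q"
  shows "finite P"
proof -
  obtain n where n: "R / (s/2) < 2^n" using real_arch_pow[of 2] by auto
  have rho: "R / 2^n < s/2" using n assms(2) by (simp add: field_simps)
  obtain C where C: "finite C" "ball y R \<subseteq> (\<Union>c\<in>C. ball c (R/2^n))"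
    using doubling_iter[OF assms(1)] by blast
  have sub: "P \<subseteq> (\<Union>c\<in>C. P \<inter> ball c (R/2^n))" using C assms(3) by blast
  have "finite (P \<inter> ball c (R/2^n))" for c
  proof (cases "P \<inter> ball c (R/2^n) = {}")
    case False
    then obtain p where p: "p \<in> P \<inter> ball c (R/2^n)" by blast
    have "P \<inter> ball c (R/2^n) \<subseteq> {p}"
    proof
      fix q assume q: "q \<in> P \<inter> ball c (R/2^n)"
      have "dist p q \<le> dist c p + dist c q" by (metis dist_commute dist_triangle)
      also have "\<dots> < s"
      proof -
        have h1: "dist c p < R/2^n" "dist c q < R/2^n" using p q by auto
        show ?thesis using h1 rho by linarith
      qed
      finally show "q \<in> {p}" using assms(4) p q by force
    qed
    then show ?thesis using finite_subset by blast
  qed simp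
  then show ?thesis using sub C(1) by (meson finite_UN_I finite_subset)
qed

theorem lemma3p5:
  fixes x :: "int \<Rightarrow> 'i \<Rightarrow> 'a::metric_space"
    and I :: "int \<Rightarrow> 'i set"
    and E :: "'a set"
    and m :: int
    and b0 B0 \<delta> :: real
    and leq :: "int \<times> 'i \<Rightarrow> int \<times> 'i \<Rightarrow> bool"
    and \<alpha>0 :: 'i
  assumes doubling: "geometrically_doubling TYPE('a)"
    and params: "0 < b0" "b0 \<le> B0" "0 < \<delta>" "\<delta> < 1" "12 * B0 * \<delta> \<le> b0"
    and sep: "\<And>k \<alpha> \<beta>. \<alpha> \<in> I k \<Longrightarrow> \<beta> \<in> I k \<Longrightarrow> \<alpha> \<noteq> \<beta> \<Longrightarrow>
                 dist (x k \<alpha>) (x k \<beta>) \<ge> b0 * \<delta> powi k"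
    and cover: "\<And>k y. \<exists>\<alpha>\<in>I k. dist y (x k \<alpha>) < B0 * \<delta> powi k"
    and cover_F: "\<And>k F y. k \<ge> m \<Longrightarrow> F \<in> {E, - E} \<Longrightarrow> y \<in> F \<Longrightarrow>
                 \<exists>\<alpha>\<in>I k. x k \<alpha> \<in> F \<and> dist y (x k \<alpha>) < B0 * \<delta> powi k"
    and sep_F: "\<And>k F \<alpha> y. k \<ge> m \<Longrightarrow> F \<in> {E, - E} \<Longrightarrow> \<alpha> \<in> I k \<Longrightarrow> x k \<alpha> \<in> F \<Longrightarrow>
                 y \<in> - F \<Longrightarrow> dist (x k \<alpha>) y \<ge> b0 * \<delta> powi k"
    and alpha0: "\<alpha>0 \<in> I m" "x m \<alpha>0 \<in> E"
    and alpha0_unique: "\<And>\<alpha>. \<alpha> \<in> I m \<Longrightarrow> x m \<alpha> \<in> E \<Longrightarrow> \<alpha> = \<alpha>0"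
    and dyadic: "dyadic_partial_order x I \<delta> b0 B0 leq"
    and compat: "\<And>k \<alpha> l \<beta>. k \<ge> m \<Longrightarrow> \<alpha> \<in> I k \<Longrightarrow> \<beta> \<in> I l \<Longrightarrow> leq (l,\<beta>) (k,\<alpha>) \<Longrightarrow>
                 (x l \<beta> \<in> E \<longleftrightarrow> x k \<alpha> \<in> E)"
  defines "Qbar \<equiv> (\<lambda>\<alpha>. closure {x l \<beta> | l \<beta>. \<beta> \<in> I l \<and> leq (l,\<beta>) (m,\<alpha>)})"
  defines "Qtilde \<equiv> UNIV - (\<Union>\<gamma>\<in>I m - {\<alpha>0}. Qbar \<gamma>)"
  shows "Qtilde \<subseteq> E \<and> E \<subseteq> Qbar \<alpha>0"
proof -
  note dd = dyadic[unfolded dyadic_partial_order_def]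
  note dd1 = dd[THEN conjunct1]
  note dd3 = dd[THEN conjunct2, THEN conjunct2, THEN conjunct1]
  note dd4 = dd[THEN conjunct2, THEN conjunct2, THEN conjunct2, THEN conjunct1]
  note dd7 = dd[THEN conjunct2, THEN conjunct2, THEN conjunct2, THEN conjunct2, THEN conjunct2, THEN conjunct2]
  have refl: "\<And>k \<alpha>. \<alpha> \<in> I k \<Longrightarrow> leq (k,\<alpha>) (k,\<alpha>)" using dd1 by blast
  have trans: "\<And>k \<alpha> l \<beta> j \<gamma>. \<alpha> \<in> I k \<Longrightarrow> \<beta> \<in> I l \<Longrightarrow> \<gamma> \<in> I j \<Longrightarrow>
        leq (k,\<alpha>) (l,\<beta>) \<Longrightarrow> leq (l,\<beta>) (j,\<gamma>) \<Longrightarrow> leq (k,\<alpha>) (j,\<gamma>)"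
    using dd3 by blast
  have par: "\<And>k \<beta>. \<beta> \<in> I (k+1) \<Longrightarrow> \<exists>\<alpha>. \<alpha> \<in> I k \<and> leq (k+1,\<beta>) (k,\<alpha>)"
    using dd4 by blast
  have pdist: "\<And>k \<alpha> \<beta>. \<alpha> \<in> I k \<Longrightarrow> \<beta> \<in> I (k+1) \<Longrightarrow> leq (k+1,\<beta>) (k,\<alpha>) \<Longrightarrow>
      dist (x (k+1) \<beta>) (x k \<alpha>) < B0 * \<delta> powi k"
    using dd7 by blast
  have B0pos: "0 < B0" using params by linarith
  have e12: "B0 * (12*\<delta>) = 12 * B0 * \<delta>" by algebra
  have "B0 * (12*\<delta>) \<le> B0 * 1" using params e12 by linarith
  then have "12*\<delta> \<le> 1" using B0pos by (simp only: mult_le_cancel_left_pos)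
  then have d12: "\<delta> \<le> 1/12" by linarith
  have pk: "\<And>n. \<delta> powi (m + int n) = \<delta> powi m * \<delta> ^ n"
    using params by (simp add: power_int_add)
  have pmpos: "0 < \<delta> powi m" using params by simp
  have anc: "\<forall>\<alpha>\<in>I (m + int n). \<exists>\<gamma>\<in>I m. leq (m + int n, \<alpha>) (m, \<gamma>) \<and>
      dist (x (m + int n) \<alpha>) (x m \<gamma>) \<le> 2*B0*\<delta> powi m - 2*B0*\<delta> powi (m + int n)" for n
  proof (induction n)
    case 0
    then show ?case using refl by fastforce
  next
    case (Suc n)
    define k where "k = m + int n"
    have eq: "m + int (Suc n) = k + 1" unfolding k_def by simp
    show ?case unfolding eq
    proof
      fix \<alpha> assume a: "\<alpha> \<in> I (k+1)"
      obtain \<alpha>' where a': "\<alpha>' \<in> I k" "leq (k+1,\<alpha>) (k,\<alpha>')" using par[OF a] by blast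
      have d1: "dist (x (k+1) \<alpha>) (x k \<alpha>') < B0 * \<delta> powi k" using pdist[OF a'(1) a a'(2)] .
      obtain \<gamma> where g: "\<gamma> \<in> I m" "leq (k, \<alpha>') (m, \<gamma>)"
        "dist (x k \<alpha>') (x m \<gamma>) \<le> 2*B0*\<delta> powi m - 2*B0*\<delta> powi k"
        using Suc a'(1) unfolding k_def by blast
      have l: "leq (k+1,\<alpha>) (m,\<gamma>)" using trans[OF a a'(1) g(1) a'(2) g(2)] .
      define D where "D = \<delta> powi k"
      have Dpos: "0 < D" unfolding D_def using params by simp
      have Dk1: "\<delta> powi (k+1) = D * \<delta>" unfolding D_def using params by (simp add: power_int_add_1)
      have "B0 * D * (2*\<delta>) \<le> B0 * D * 1"
        using d12 B0pos Dpos by (intro mult_left_mono) auto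
      have "dist (x (k+1) \<alpha>) (x m \<gamma>) \<le> dist (x (k+1) \<alpha>) (x k \<alpha>') + dist (x k \<alpha>') (x m \<gamma>)"
        by (rule dist_triangle)
      also have "\<dots> \<le> 2*B0*\<delta> powi m - 2*B0*\<delta> powi (k+1)"
        using d1 g(3) \<open>B0 * D * (2*\<delta>) \<le> B0 * D * 1\<close> unfolding Dk1 D_def[symmetric]
        by (simp add: algebra_simps)
      finally show "\<exists>\<gamma>\<in>I m. leq (k + 1, \<alpha>) (m, \<gamma>) \<and>
          dist (x (k + 1) \<alpha>) (x m \<gamma>) \<le> 2 * B0 * \<delta> powi m - 2 * B0 * \<delta> powi (k + 1)"
        using l g(1) by blast
    qed
  qed
  have small: "\<And>\<epsilon>. 0 < \<epsilon> \<Longrightarrow> \<exists>N. B0 * \<delta> powi m * \<delta> ^ N < \<epsilon>"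
  proof -
    fix \<epsilon> :: real assume e: "0 < \<epsilon>"
    obtain N where "\<delta> ^ N < \<epsilon> / (B0 * \<delta> powi m)"
      using real_arch_pow_inv[of "\<epsilon> / (B0 * \<delta> powi m)" \<delta>] e B0pos pmpos params by auto
    then show "\<exists>N. B0 * \<delta> powi m * \<delta> ^ N < \<epsilon>"
      using B0pos pmpos by (auto simp: field_simps mult.commute)
  qed
  have mono: "\<And>N n. N \<le> n \<Longrightarrow> \<delta> ^ n \<le> \<delta> ^ N"
    using params by (simp add: power_decreasing)
  have part1: "E \<subseteq> Qbar \<alpha>0"
  proof
    fix y assume y: "y \<in> E"
    show "y \<in> Qbar \<alpha>0" unfolding Qbar_def closure_approachable
    proof (intro allI impI)
      fix \<epsilon> :: real assume e: "0 < \<epsilon>"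
      obtain n where n: "B0 * \<delta> powi m * \<delta> ^ n < \<epsilon>" using small[OF e] by blast
      obtain \<alpha> where a: "\<alpha> \<in> I (m + int n)" "x (m + int n) \<alpha> \<in> E"
        "dist y (x (m + int n) \<alpha>) < B0 * \<delta> powi (m + int n)"
        using cover_F[of "m + int n" E y] y by auto
      obtain \<gamma> where g: "\<gamma> \<in> I m" "leq (m + int n, \<alpha>) (m, \<gamma>)" using anc a(1) by blast
      have "x m \<gamma> \<in> E" using compat[of m \<gamma> \<alpha> "m + int n"] g a by simp
      then have "\<gamma> = \<alpha>0" using alpha0_unique g(1) by blast
      then have "x (m + int n) \<alpha> \<in> {x l \<beta> | l \<beta>. \<beta> \<in> I l \<and> leq (l,\<beta>) (m,\<alpha>0)}"
        using g a by blast
      moreover have "dist (x (m + int n) \<alpha>) y < \<epsilon>"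
        using a(3) n pk by (simp add: dist_commute mult.assoc)
      ultimately show "\<exists>z\<in>{x l \<beta> | l \<beta>. \<beta> \<in> I l \<and> leq (l,\<beta>) (m,\<alpha>0)}. dist z y < \<epsilon>"
        by blast
    qed
  qed
  have part2: "Qtilde \<subseteq> E"
  proof
    fix y assume yQ: "y \<in> Qtilde"
    show "y \<in> E"
    proof (rule ccontr)
      assume yE: "y \<notin> E"
      have ex: "\<exists>\<gamma>. \<gamma> \<in> I m \<and> x m \<gamma> \<notin> E \<and> dist y (x m \<gamma>) < 3*B0*\<delta> powi m \<and>
          (\<exists>\<alpha>\<in>I (m + int n). leq (m + int n, \<alpha>) (m, \<gamma>) \<and>
              dist y (x (m + int n) \<alpha>) < B0 * \<delta> powi (m + int n))" for n
      proof -
        obtain \<alpha> where a: "\<alpha> \<in> I (m + int n)" "x (m + int n) \<alpha> \<in> - E"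
          "dist y (x (m + int n) \<alpha>) < B0 * \<delta> powi (m + int n)"
          using cover_F[of "m + int n" "- E" y] yE by auto
        obtain \<gamma> where g: "\<gamma> \<in> I m" "leq (m + int n, \<alpha>) (m, \<gamma>)"
          "dist (x (m + int n) \<alpha>) (x m \<gamma>) \<le> 2*B0*\<delta> powi m - 2*B0*\<delta> powi (m + int n)"
          using anc a(1) by blast
        have "x m \<gamma> \<notin> E" using compat[of m \<gamma> \<alpha> "m + int n"] g a by simp
        have "\<delta> ^ n \<le> 1" using params by (simp add: power_le_one)
        then have "\<delta> powi (m + int n) \<le> \<delta> powi m" unfolding pk using pmpos
          by (simp add: mult_left_le)
        have "dist y (x m \<gamma>) \<le> dist y (x (m + int n) \<alpha>) + dist (x (m + int n) \<alpha>) (x m \<gamma>)"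
          by (rule dist_triangle)
        also have "\<dots> < 3*B0*\<delta> powi m"
        proof -
          have "0 \<le> B0 * \<delta> powi (m + int n)" using B0pos params by simp
          moreover have "0 < B0 * \<delta> powi m" using B0pos pmpos by simp
          moreover have "2*B0*\<delta> powi m - 2*B0*\<delta> powi (m+int n) = 2*(B0*\<delta> powi m) - 2*(B0*\<delta> powi (m+int n))"
            "3*B0*\<delta> powi m = 3*(B0*\<delta> powi m)" by (simp_all add: mult.assoc)
          ultimately show ?thesis using a(3) g(3) by linarith
        qed
        finally show ?thesis using g a \<open>x m \<gamma> \<notin> E\<close> by blast
      qed
      then obtain g where gp: "\<And>n. g n \<in> I m \<and> x m (g n) \<notin> E \<and> dist y (x m (g n)) < 3*B0*\<delta> powi m \<and>
          (\<exists>\<alpha>\<in>I (m + int n). leq (m + int n, \<alpha>) (m, g n) \<and>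
              dist y (x (m + int n) \<alpha>) < B0 * \<delta> powi (m + int n))"
        by metis
      define S where "S = {\<gamma>\<in>I m. dist y (x m \<gamma>) < 3*B0*\<delta> powi m}"
      have sp: "0 < b0 * \<delta> powi m" using params pmpos by simp
      have injS: "inj_on (x m) S"
      proof (rule inj_onI)
        fix a b assume "a \<in> S" "b \<in> S" "x m a = x m b"
        then show "a = b" using sep[of a m b] sp unfolding S_def by force
      qed
      have "finite (x m ` S)"
      proof (rule sep_finite[OF doubling sp, of _ y "3*B0*\<delta> powi m"])
        show "x m ` S \<subseteq> ball y (3 * B0 * \<delta> powi m)" unfolding S_def by auto
        fix p q assume "p \<in> x m ` S" "q \<in> x m ` S" "p \<noteq> q"
        then show "b0 * \<delta> powi m \<le> dist p q" using sep unfolding S_def by auto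
      qed
      then have fS: "finite S" using finite_imageD injS by blast
      have "range g \<subseteq> S" using gp unfolding S_def by auto
      then have "finite (range g)" using fS finite_subset by blast
      then obtain \<gamma> where gr: "\<gamma> \<in> range g" and inf: "infinite (g -` {\<gamma>})"
        using inf_img_fin_dom[of g UNIV] by auto
      obtain n0 where "\<gamma> = g n0" using gr by blast
      then have gI: "\<gamma> \<in> I m" "x m \<gamma> \<notin> E" using gp by auto
      then have "\<gamma> \<noteq> \<alpha>0" using alpha0 by auto
      have "y \<in> Qbar \<gamma>" unfolding Qbar_def closure_approachable
      proof (intro allI impI)
        fix \<epsilon> :: real assume e: "0 < \<epsilon>"
        obtain N where N: "B0 * \<delta> powi m * \<delta> ^ N < \<epsilon>" using small[OF e] by blast
        obtain n where n: "n \<ge> N" "n \<in> g -` {\<gamma>}" using inf unfolding infinite_nat_iff_unbounded_le by blast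
        then have gn: "g n = \<gamma>" by simp
        obtain \<alpha> where a: "\<alpha>\<in>I (m + int n)" "leq (m + int n, \<alpha>) (m, \<gamma>)"
            "dist y (x (m + int n) \<alpha>) < B0 * \<delta> powi (m + int n)"
          using gp[of n] gn by auto
        have "B0 * \<delta> powi m * \<delta> ^ n \<le> B0 * \<delta> powi m * \<delta> ^ N"
          using mono[OF n(1)] B0pos pmpos by (intro mult_left_mono) auto
        then have "dist (x (m + int n) \<alpha>) y < \<epsilon>"
          using a(3) N pk by (simp add: dist_commute mult.assoc)
        then show "\<exists>z\<in>{x l \<beta> | l \<beta>. \<beta> \<in> I l \<and> leq (l,\<beta>) (m,\<gamma>)}. dist z y < \<epsilon>"
          using a by blast
      qed
      then show False using yQ gI(1) \<open>\<gamma> \<noteq> \<alpha>0\<close> unfolding Qtilde_def by blast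
    qed
  qed
  show ?thesis using part1 part2 by blast
qed

end
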